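(* Let $y\in\tilde W$ and $s\in\tilde{\mathbb S}$, and assume $s=s_H$ is the reflection in the affine root hyperplane $H=H_{\alpha,k}$ with $\alpha\in\Sigma$, $k\in\mathbb Z$. Let $\beta\in\Sigma$. (1) If $\beta\notin\{\pm\alpha,\pm\bar y\delta(\alpha)\}$, then $sy\delta(s)\mathbf a\geqslant_{\bar s(\beta)}\mathbf a$ if and only if $y\mathbf a\geqslant_\beta\mathbf a$. (2) If $\beta\neq\pm\bar y\delta(\alpha)$, then $y\mathbf a\geqslant_\beta\mathbf a$ if and only if $y\delta(s)\mathbf a\geqslant_\beta\mathbf a$.
   Context: Let $\tilde W=X_*(T)_\Gamma\rtimes W$ be the Iwahori–Weyl group of a quasi-split connected semisimple group $G$ over a local field $F$ (finite extension of $\mathbb Q_p$ or $\mathbb F_q((\epsilon))$) split over a tamely ramified extension, relative to a maximal $L$-split torus $S$ defined over $F$ with centralizer $T$, where $L$ is the completion of the maximal unramified extension of $F$ and $\Gamma=\mathrm{Gal}(\bar L/L)$. Let $\delta$ be the automorphism of $\tilde W$ induced by the Frobenius $\sigma$ of $L/F$; it also acts on $W$ and on the root system $\Sigma$ below. $V=X_*(T)_\Gamma\otimes\mathbb R$; $\Sigma$ is the reduced root system such that affine roots are $v\mapsto\langle a,v\rangle+k$, $a\in\Sigma,k\in\mathbb Z$; $H_{a,k}=\{v\in V:\langle a,v\rangle=k\}$; $W=W(\Sigma)$. $\mathbf a$ is a fixed $\sigma$-stable base alcove; $\tilde W$ acts on alcoves; $\tilde{\mathbb S}$ is the set of simple affine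 reflections (reflections in walls of $\mathbf a$). For $x\in\tilde W$, $\bar x$ denotes its image under the projection $\tilde W\to W$. For $a\in\Sigma$ and an alcove $\mathbf b$, $k(a,\mathbf b)$ is the unique integer $k$ such that $\mathbf b$ lies between $H_{a,k}$ and $H_{a,k-1}$; for alcoves $\mathbf b_1,\mathbf b_2$, $\mathbf b_1\geqslant_a\mathbf b_2$ means $k(a,\mathbf b_1)\ge k(a,\mathbf b_2)$. *)

theory Defs
  imports "HOL-Analysis.Analysis"
begin

text \<open>The real vector space V is modelled by a Euclidean space 'v; roots are
  identified with vectors via the (W- and Frobenius-invariant) inner product.\<close>

definition coroot :: "'v::euclidean_space \<Rightarrow> 'v" where
  "coroot a = (2 / (a \<bullet> a)) *\<^sub>R a"

definition refl :: "'v::euclidean_space \<Rightarrow> 'v \<Rightarrow> 'v" where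
  "refl a v = v - (v \<bullet> a) *\<^sub>R coroot a"

text \<open>Reduced root system spanning V (G semisimple).\<close>
definition root_system :: "'v::euclidean_space set \<Rightarrow> bool" where
  "root_system R \<longleftrightarrow> finite R \<and> 0 \<notin> R \<and> span R = UNIV \<and>
     (\<forall>a\<in>R. \<forall>b\<in>R. refl a b \<in> R \<and> (b \<bullet> coroot a) \<in> \<int>) \<and>
     (\<forall>a\<in>R. \<forall>c::real. c *\<^sub>R a \<in> R \<longrightarrow> c = 1 \<or> c = -1)"

inductive_set weyl :: "'v::euclidean_space set \<Rightarrow> ('v \<Rightarrow> 'v) set" for R where
  weyl_id: "id \<in> weyl R"
| weyl_step: "a \<in> R \<Longrightarrow> w \<in> weyl R \<Longrightarrow> refl a \<circ> w \<in> weyl R"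

definition hyp :: "'v::euclidean_space \<Rightarrow> int \<Rightarrow> 'v set" where
  "hyp a k = {v. a \<bullet> v = of_int k}"

text \<open>Alcoves: connected components of the complement of all H_{a,k}; since
  R is finite these are the nonempty sets cut out by a choice of strip for every root.\<close>
definition alcove :: "'v::euclidean_space set \<Rightarrow> 'v set \<Rightarrow> bool" where
  "alcove R B \<longleftrightarrow> B \<noteq> {} \<and>
     (\<exists>k::'v \<Rightarrow> int. B = {v. \<forall>a\<in>R. of_int (k a) - 1 < a \<bullet> v \<and> a \<bullet> v < of_int (k a)})"

definition kval :: "'v::euclidean_space \<Rightarrow> 'v set \<Rightarrow> int" where
  "kval a B = (THE k::int. B \<subseteq> {v. of_int k - 1 < a \<bullet> v \<and> a \<bullet> v < of_int k})"

definition alc_geq :: "'v::euclidean_space \<Rightarrow> 'v set \<Rightarrow> 'v set \<Rightarrow> bool" where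
  "alc_geq a B1 B2 \<longleftrightarrow> kval a B1 \<ge> kval a B2"

definition is_wall :: "'v::euclidean_space set \<Rightarrow> 'v set \<Rightarrow> 'v set \<Rightarrow> bool" where
  "is_wall R B H \<longleftrightarrow> (\<exists>a\<in>R. \<exists>k. H = hyp a k) \<and>
     aff_dim (closure B \<inter> H) = int DIM('v) - 1"

text \<open>Elements of the Iwahori-Weyl group X_*(T)_Gamma \<rtimes> W, via their image
  (t, w) in the affine group of V: v \<mapsto> w v + t, where t lies in the image L of X_*(T)_Gamma.\<close>
type_synonym 'v iw = "'v \<times> ('v \<Rightarrow> 'v)"

definition iw_act :: "'v::euclidean_space iw \<Rightarrow> 'v \<Rightarrow> 'v" where
  "iw_act x v = snd x v + fst x"

definition iw_mult :: "'v::euclidean_space iw \<Rightarrow> 'v iw \<Rightarrow> 'v iw" where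
  "iw_mult x y = (fst x + snd x (fst y), snd x \<circ> snd y)"

definition IW :: "'v::euclidean_space set \<Rightarrow> 'v set \<Rightarrow> 'v iw set" where
  "IW R L = {(t, w). t \<in> L \<and> w \<in> weyl R}"

definition iw_bar :: "'v::euclidean_space iw \<Rightarrow> 'v \<Rightarrow> 'v" where
  "iw_bar x = snd x"

definition aff_refl :: "'v::euclidean_space \<Rightarrow> int \<Rightarrow> 'v iw" where
  "aff_refl a k = (of_int k *\<^sub>R coroot a, refl a)"

definition iw_delta :: "('v::euclidean_space \<Rightarrow> 'v) \<Rightarrow> 'v iw \<Rightarrow> 'v iw" where
  "iw_delta \<sigma> x = (\<sigma> (fst x), \<sigma> \<circ> snd x \<circ> inv \<sigma>)"

text \<open>Standing data: root system R, translation lattice L (image of X_*(T)_Gamma),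
  Frobenius sigma, sigma-stable base alcove A.\<close>
definition iw_datum :: "'v::euclidean_space set \<Rightarrow> 'v set \<Rightarrow> ('v \<Rightarrow> 'v) \<Rightarrow> 'v set \<Rightarrow> bool" where
  "iw_datum R L \<sigma> A \<longleftrightarrow> root_system R \<and>
     0 \<in> L \<and> (\<forall>s\<in>L. \<forall>t\<in>L. s + t \<in> L \<and> - s \<in> L) \<and>
     (\<forall>w\<in>weyl R. w ` L \<subseteq> L) \<and> coroot ` R \<subseteq> L \<and>
     (\<forall>a\<in>R. \<forall>t\<in>L. a \<bullet> t \<in> \<int>) \<and>
     linear \<sigma> \<and> bij \<sigma> \<and> (\<forall>u v. \<sigma> u \<bullet> \<sigma> v = u \<bullet> v) \<and>
     \<sigma> ` R = R \<and> \<sigma> ` L = L \<and>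
     alcove R A \<and> \<sigma> ` A = A"

end

theory Submission imports Defs begin

lemma refl_inner_left: "refl a u \<bullet> v = u \<bullet> refl a v"
  unfolding refl_def coroot_def by (simp add: inner_diff_left inner_diff_right inner_commute)

lemma refl_refl: "a \<noteq> 0 \<Longrightarrow> refl a (refl a v) = v"
  unfolding refl_def coroot_def by (simp add: inner_diff_left inner_diff_right inner_commute algebra_simps)

lemma refl_inner_refl: "a \<noteq> 0 \<Longrightarrow> refl a u \<bullet> refl a v = u \<bullet> v"
  by (simp add: refl_inner_left refl_refl)

lemma linear_refl: "linear (refl a)"
  unfolding refl_def coroot_def
  by (intro linearI) (simp_all add: inner_add_left add_divide_distrib scaleR_add_left algebra_simps)

lemma refl_coroot: "a \<noteq> 0 \<Longrightarrow> refl a b \<bullet> coroot a = - (b \<bullet> coroot a)"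
  unfolding refl_def coroot_def by (simp add: inner_diff_left inner_diff_right inner_commute field_simps)

lemma bij_refl: "a \<noteq> 0 \<Longrightarrow> bij (refl a)"
  by (metis bijI' refl_refl)

lemma refl_image: assumes "root_system R" "a \<in> R" shows "refl a ` R = R"
proof -
  have a0: "a \<noteq> 0" using assms unfolding root_system_def by auto
  have sub: "refl a ` R \<subseteq> R" using assms unfolding root_system_def by auto
  moreover have "R \<subseteq> refl a ` R"
  proof
    fix b assume "b \<in> R"
    then have "refl a b \<in> R" using sub by auto
    then show "b \<in> refl a ` R" using refl_refl[OF a0, of b] by (metis imageI)
  qed
  ultimately show ?thesis by auto
qed

lemma weyl_props:
  assumes rs: "root_system R" and "w \<in> weyl R"
  shows "linear w \<and> (\<forall>u v. w u \<bullet> w v = u \<bullet> v) \<and> bij w \<and> w ` R = R"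
  using assms(2)
proof induct
  case weyl_id then show ?case by (simp add: linear_id[unfolded id_def] bij_id[unfolded id_def])
next
  case (weyl_step a w)
  have a0: "a \<noteq> 0" using rs weyl_step unfolding root_system_def by auto
  have l: "linear (refl a \<circ> w)" using weyl_step linear_compose[of w "refl a"] linear_refl by blast
  have b: "bij (refl a \<circ> w)" using weyl_step bij_comp bij_refl[OF a0] by blast
  have i: "(refl a \<circ> w) ` R = R" using weyl_step refl_image[OF rs weyl_step(1)] by (metis image_comp)
  show ?case using l[unfolded comp_def] b[unfolded comp_def] i weyl_step refl_inner_refl[OF a0] by simp
qed

lemma kval_eq:
  assumes "B \<noteq> {}" and h: "\<And>v. v \<in> B \<Longrightarrow> of_int K - 1 < b \<bullet> f v \<and> b \<bullet> f v < of_int K"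
  shows "kval b (f ` B) = K"
  unfolding kval_def
proof (rule the_equality)
  show "f ` B \<subseteq> {v. real_of_int K - 1 < b \<bullet> v \<and> b \<bullet> v < real_of_int K}" using h by auto
next
  fix k' assume k': "f ` B \<subseteq> {v. real_of_int k' - 1 < b \<bullet> v \<and> b \<bullet> v < real_of_int k'}"
  obtain v where v: "v \<in> B" using assms(1) by auto
  then have 1: "real_of_int k' - 1 < b \<bullet> f v \<and> b \<bullet> f v < real_of_int k'" using k' by auto
  have 2: "real_of_int K - 1 < b \<bullet> f v \<and> b \<bullet> f v < real_of_int K" using h v by auto
  have "real_of_int k' < real_of_int (K + 1)" "real_of_int K < real_of_int (k' + 1)" using 1 2 by auto
  then have "k' < K + 1" "K < k' + 1" by (simp_all only: of_int_less_iff)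
  then show "k' = K" by simp
qed

lemma two_hyp:
  fixes a d :: "'v::euclidean_space"
  assumes a0: "a \<noteq> 0" and nd: "\<And>c. d \<noteq> c *\<^sub>R a"
  shows "aff_dim ({v. a \<bullet> v = r} \<inter> {v. d \<bullet> v = q}) \<le> int DIM('v) - 2"
proof -
  have nsub: "\<not> {v. a \<bullet> v = r} \<subseteq> {v. d \<bullet> v = q}"
  proof
    assume S: "{v. a \<bullet> v = r} \<subseteq> {v. d \<bullet> v = q}"
    define p where "p = (r / (a \<bullet> a)) *\<^sub>R a"
    define u where "u = d - ((d \<bullet> a) / (a \<bullet> a)) *\<^sub>R a"
    have aa: "a \<bullet> a \<noteq> 0" using a0 by simp
    have "a \<bullet> p = r" using aa unfolding p_def by simp
    moreover have "a \<bullet> (p + u) = r" using aa unfolding p_def u_def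
      by (simp add: inner_add_right inner_diff_right inner_commute)
    ultimately have "d \<bullet> p = q" "d \<bullet> (p + u) = q" using S by auto
    then have du: "d \<bullet> u = 0" by (simp add: inner_add_right)
    have "u \<bullet> u = d \<bullet> u - ((d \<bullet> a) / (a \<bullet> a)) * (a \<bullet> u)"
      unfolding u_def by (simp add: inner_diff_left)
    also have "a \<bullet> u = 0" using aa unfolding u_def by (simp add: inner_diff_right inner_commute)
    finally have "u = 0" using du by simp
    then have "d = ((d \<bullet> a) / (a \<bullet> a)) *\<^sub>R a" unfolding u_def by simp
    then show False using nd by blast
  qed
  show ?thesis
  proof (cases "{v. a \<bullet> v = r} \<inter> {v. d \<bullet> v = q} = {}")
    case True then show ?thesis using DIM_positive[where 'a='v] by simp
  next
    case False
    have "aff_dim ({v. a \<bullet> v = r} \<inter> {v. d \<bullet> v = q}) = aff_dim {v. a \<bullet> v = r} - 1"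
      using aff_dim_affine_Int_hyperplane[OF affine_hyperplane[of a r], of d q] nsub False by auto
    then show ?thesis using aff_dim_hyperplane[OF a0] by simp
  qed
qed

lemma int_between:
  fixes x :: real and K K' :: int
  assumes "of_int K - 1 \<le> x" "x \<le> of_int K" "of_int K' - 1 \<le> x" "x \<le> of_int K'" "K \<noteq> K'"
  shows "x = of_int (min K K')"
proof (cases "K < K'")
  case True
  then have "K + 1 \<le> K'" by simp
  then have "real_of_int K + 1 \<le> real_of_int K'" by (metis of_int_1 of_int_add of_int_le_iff)
  then show ?thesis using assms True by (simp add: min_def)
next
  case False
  then have "K' + 1 \<le> K" using assms(5) by simp
  then have "real_of_int K' + 1 \<le> real_of_int K" by (metis of_int_1 of_int_add of_int_le_iff)
  then show ?thesis using assms False by (simp add: min_def)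
qed

lemma core:
  fixes \<alpha> \<delta> :: "'v::euclidean_space" and kA :: "'v \<Rightarrow> int"
  assumes rs: "root_system R" and \<alpha>: "\<alpha> \<in> R" and \<delta>: "\<delta> \<in> R" and ne: "\<delta> \<noteq> \<alpha>" "\<delta> \<noteq> -\<alpha>"
    and hA: "\<And>a v. a \<in> R \<Longrightarrow> v \<in> A \<Longrightarrow> of_int (kA a) - 1 < a \<bullet> v \<and> a \<bullet> v < of_int (kA a)"
    and wall: "aff_dim (closure A \<inter> hyp \<alpha> k) = int DIM('v) - 1"
    and m: "\<delta> \<bullet> coroot \<alpha> = of_int m"
  shows "kA (refl \<alpha> \<delta>) + k * m = kA \<delta>"
proof (rule ccontr)
  assume neq: "kA (refl \<alpha> \<delta>) + k * m \<noteq> kA \<delta>"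
  define e where "e = refl \<alpha> \<delta>"
  have a0: "\<alpha> \<noteq> 0" using rs \<alpha> unfolding root_system_def by auto
  have eR: "e \<in> R" using rs \<alpha> \<delta> unfolding root_system_def e_def by auto
  have eq: "e \<bullet> v = \<delta> \<bullet> v - (\<alpha> \<bullet> v) * of_int m" for v
    unfolding e_def refl_inner_left using m
    by (simp add: refl_def inner_diff_right inner_commute)
  define C where "C = {v. of_int (kA \<delta>) - 1 \<le> \<delta> \<bullet> v} \<inter> {v. \<delta> \<bullet> v \<le> of_int (kA \<delta>)}
     \<inter> {v. of_int (kA e) - 1 \<le> e \<bullet> v} \<inter> {v. e \<bullet> v \<le> of_int (kA e)}"
  have "closed C" unfolding C_def
    by (intro closed_Int closed_halfspace_le closed_halfspace_ge)
  moreover have "A \<subseteq> C" unfolding C_def using hA[OF \<delta>] hA[OF eR] by (auto intro: less_imp_le)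
  ultimately have clC: "closure A \<subseteq> C" by (rule closure_minimal[rotated])
  define K' where "K' = kA e + k * m"
  have sub: "closure A \<inter> hyp \<alpha> k \<subseteq> {v. \<alpha> \<bullet> v = of_int k} \<inter> {v. \<delta> \<bullet> v = of_int (min (kA \<delta>) K')}"
  proof
    fix p assume p: "p \<in> closure A \<inter> hyp \<alpha> k"
    then have pC: "p \<in> C" and ap: "\<alpha> \<bullet> p = of_int k" using clC unfolding hyp_def by auto
    have "e \<bullet> p = \<delta> \<bullet> p - of_int k * of_int m" using eq[of p] ap by simp
    then have "of_int K' - 1 \<le> \<delta> \<bullet> p" "\<delta> \<bullet> p \<le> of_int K'" using pC unfolding C_def K'_def by auto
    moreover have "of_int (kA \<delta>) - 1 \<le> \<delta> \<bullet> p" "\<delta> \<bullet> p \<le> of_int (kA \<delta>)" using pC unfolding C_def by auto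
    moreover have "kA \<delta> \<noteq> K'" using neq unfolding K'_def e_def by auto
    ultimately have "\<delta> \<bullet> p = of_int (min (kA \<delta>) K')" using int_between by blast
    then show "p \<in> {v. \<alpha> \<bullet> v = of_int k} \<inter> {v. \<delta> \<bullet> v = of_int (min (kA \<delta>) K')}" using ap by simp
  qed
  have nd: "\<delta> \<noteq> c *\<^sub>R \<alpha>" for c
  proof
    assume "\<delta> = c *\<^sub>R \<alpha>"
    then have "c = 1 \<or> c = -1" using rs \<alpha> \<delta> unfolding root_system_def by auto
    then show False using ne \<open>\<delta> = c *\<^sub>R \<alpha>\<close> by auto
  qed
  have "aff_dim (closure A \<inter> hyp \<alpha> k) \<le> int DIM('v) - 2"
    using aff_dim_subset[OF sub] two_hyp[OF a0 nd, of "of_int k" "of_int (min (kA \<delta>) K')"] by linarith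
  then show False using wall by simp
qed

theorem lemma4p4p2:
  fixes R L A :: "'v::euclidean_space set" and \<sigma> :: "'v \<Rightarrow> 'v"
    and y :: "'v iw" and \<alpha> \<beta> :: 'v and k :: int
  assumes datum: "iw_datum R L \<sigma> A"
    and y: "y \<in> IW R L"
    and \<alpha>: "\<alpha> \<in> R" and wall: "is_wall R A (hyp \<alpha> k)"
    and \<beta>: "\<beta> \<in> R"
  shows "(\<beta> \<notin> {\<alpha>, - \<alpha>, iw_bar y (\<sigma> \<alpha>), - iw_bar y (\<sigma> \<alpha>)} \<longrightarrow>
           (alc_geq (iw_bar (aff_refl \<alpha> k) \<beta>)
              (iw_act (iw_mult (iw_mult (aff_refl \<alpha> k) y) (iw_delta \<sigma> (aff_refl \<alpha> k))) ` A) A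
            \<longleftrightarrow> alc_geq \<beta> (iw_act y ` A) A))
       \<and> (\<beta> \<notin> {iw_bar y (\<sigma> \<alpha>), - iw_bar y (\<sigma> \<alpha>)} \<longrightarrow>
           (alc_geq \<beta> (iw_act y ` A) A
            \<longleftrightarrow> alc_geq \<beta> (iw_act (iw_mult y (iw_delta \<sigma> (aff_refl \<alpha> k))) ` A) A))"
proof -
  have rs: "root_system R" and intL: "\<forall>a\<in>R. \<forall>t\<in>L. a \<bullet> t \<in> \<int>"
    and l\<sigma>: "linear \<sigma>" and b\<sigma>: "bij \<sigma>" and o\<sigma>: "\<forall>u v. \<sigma> u \<bullet> \<sigma> v = u \<bullet> v"
    and \<sigma>R: "\<sigma> ` R = R" and alc: "alcove R A" and \<sigma>A: "\<sigma> ` A = A"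
    using datum unfolding iw_datum_def by auto
  have Ane: "A \<noteq> {}" using alc unfolding alcove_def by auto
  obtain kA :: "'v \<Rightarrow> int" where Aeq: "A = {v. \<forall>a\<in>R. of_int (kA a) - 1 < a \<bullet> v \<and> a \<bullet> v < of_int (kA a)}"
    using alc unfolding alcove_def by auto
  have hA: "\<And>a v. a \<in> R \<Longrightarrow> v \<in> A \<Longrightarrow> of_int (kA a) - 1 < a \<bullet> v \<and> a \<bullet> v < of_int (kA a)"
    using Aeq by auto
  have wall': "aff_dim (closure A \<inter> hyp \<alpha> k) = int DIM('v) - 1" using wall unfolding is_wall_def by auto
  obtain t w where yeq: "y = (t, w)" and tL: "t \<in> L" and wW: "w \<in> weyl R"
    using y unfolding IW_def by auto
  have wp: "linear w \<and> (\<forall>u v. w u \<bullet> w v = u \<bullet> v) \<and> bij w \<and> w ` R = R"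
    using weyl_props[OF rs wW] .
  then have lw: "linear w" and ow: "\<And>u v. w u \<bullet> w v = u \<bullet> v" and bw: "bij w" and wR: "w ` R = R" by auto
  have a0: "\<alpha> \<noteq> 0" using rs \<alpha> unfolding root_system_def by auto
  have lr: "linear (refl \<alpha>)" by (rule linear_refl)
  define \<gamma> where "\<gamma> = inv w \<beta>"
  have w\<gamma>: "w \<gamma> = \<beta>" unfolding \<gamma>_def using bw by (simp add: bij_is_surj surj_f_inv_f)
  have \<gamma>R: "\<gamma> \<in> R"
  proof -
    obtain r where "r \<in> R" "\<beta> = w r" using \<beta> wR by auto
    then show ?thesis unfolding \<gamma>_def using bw by (simp add: bij_is_inj inv_f_f)
  qed
  define \<delta>0 where "\<delta>0 = inv \<sigma> \<gamma>"
  have \<sigma>\<delta>: "\<sigma> \<delta>0 = \<gamma>" unfolding \<delta>0_def using b\<sigma> by (simp add: bij_is_surj surj_f_inv_f)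
  have \<delta>R: "\<delta>0 \<in> R"
  proof -
    obtain r where "r \<in> R" "\<gamma> = \<sigma> r" using \<gamma>R \<sigma>R by auto
    then show ?thesis unfolding \<delta>0_def using b\<sigma> by (simp add: bij_is_inj inv_f_f)
  qed
  have inv\<sigma>: "\<And>v. inv \<sigma> (\<sigma> v) = v" using b\<sigma> by (simp add: bij_is_inj inv_f_f)
  have "\<beta> \<bullet> t \<in> \<int>" using intL \<beta> tL by blast
  then obtain c1 where c1: "\<beta> \<bullet> t = of_int c1" by (auto elim: Ints_cases)
  have "\<delta>0 \<bullet> coroot \<alpha> \<in> \<int>" using rs \<alpha> \<delta>R unfolding root_system_def by blast
  then obtain m where m: "\<delta>0 \<bullet> coroot \<alpha> = of_int m" by (auto elim: Ints_cases)
  have "\<beta> \<bullet> coroot \<alpha> \<in> \<int>" using rs \<alpha> \<beta> unfolding root_system_def by blast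
  then obtain nb where nb: "\<beta> \<bullet> coroot \<alpha> = of_int nb" by (auto elim: Ints_cases)
  have bwx: "\<And>x. \<beta> \<bullet> w x = \<gamma> \<bullet> x" using ow w\<gamma> by metis
  have g\<sigma>: "\<And>x. \<gamma> \<bullet> \<sigma> x = \<delta>0 \<bullet> x" using o\<sigma> \<sigma>\<delta> by metis
  define sv where "sv = (\<lambda>v. refl \<alpha> v + of_int k *\<^sub>R coroot \<alpha>)"
  have ds: "\<And>v. \<delta>0 \<bullet> sv v = refl \<alpha> \<delta>0 \<bullet> v + of_int k * of_int m"
    unfolding sv_def using m by (simp add: inner_add_right refl_inner_left)
  have act1: "\<And>v. iw_act y (\<sigma> v) = w (\<sigma> v) + t" unfolding iw_act_def yeq by simp
  have act2: "\<And>v. iw_act (iw_mult y (iw_delta \<sigma> (aff_refl \<alpha> k))) (\<sigma> v) = w (\<sigma> (sv v)) + t"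
    unfolding iw_act_def iw_mult_def iw_delta_def aff_refl_def yeq sv_def
    by (simp add: inv\<sigma> linear_add[OF lw] linear_add[OF l\<sigma>] linear_add[OF lr])
  have act3: "\<And>v. iw_act (iw_mult (iw_mult (aff_refl \<alpha> k) y) (iw_delta \<sigma> (aff_refl \<alpha> k))) (\<sigma> v)
      = refl \<alpha> (w (\<sigma> (sv v)) + t) + of_int k *\<^sub>R coroot \<alpha>"
    unfolding iw_act_def iw_mult_def iw_delta_def aff_refl_def yeq sv_def
    by (simp add: inv\<sigma> linear_add[OF lw] linear_add[OF l\<sigma>] linear_add[OF lr])
  have i1: "\<And>v. \<beta> \<bullet> iw_act y (\<sigma> v) = \<delta>0 \<bullet> v + of_int c1"
    using act1 bwx g\<sigma> c1 by (simp add: inner_add_right)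
  have i2: "\<And>v. \<beta> \<bullet> iw_act (iw_mult y (iw_delta \<sigma> (aff_refl \<alpha> k))) (\<sigma> v)
       = refl \<alpha> \<delta>0 \<bullet> v + of_int (c1 + k * m)"
    using act2 bwx g\<sigma> c1 ds by (simp add: inner_add_right)
  have rc: "refl \<alpha> \<beta> \<bullet> coroot \<alpha> = - of_int nb" using refl_coroot[OF a0] nb by simp
  have i3: "\<And>v. refl \<alpha> \<beta> \<bullet> iw_act (iw_mult (iw_mult (aff_refl \<alpha> k) y) (iw_delta \<sigma> (aff_refl \<alpha> k))) (\<sigma> v)
       = refl \<alpha> \<delta>0 \<bullet> v + of_int (c1 + k * m - k * nb)"
    using act3 i2 act2 rc refl_inner_refl[OF a0] by (simp add: inner_add_right)
  have eR: "refl \<alpha> \<delta>0 \<in> R" using rs \<alpha> \<delta>R unfolding root_system_def by auto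
  have rbR: "refl \<alpha> \<beta> \<in> R" using rs \<alpha> \<beta> unfolding root_system_def by auto
  have imgs: "\<And>f. f ` A = (\<lambda>v. f (\<sigma> v)) ` A" by (subst (1) \<sigma>A[symmetric]) (simp add: image_image)
  have K1: "kval \<beta> (iw_act y ` A) = kA \<delta>0 + c1"
    unfolding imgs[of "iw_act y"] by (rule kval_eq[OF Ane]) (use hA[OF \<delta>R] i1 in auto)
  have K2: "kval \<beta> (iw_act (iw_mult y (iw_delta \<sigma> (aff_refl \<alpha> k))) ` A) = kA (refl \<alpha> \<delta>0) + (c1 + k * m)"
    unfolding imgs[of "iw_act (iw_mult y (iw_delta \<sigma> (aff_refl \<alpha> k)))"]
    by (rule kval_eq[OF Ane]) (use hA[OF eR] i2 in auto)
  have K3: "kval (refl \<alpha> \<beta>) (iw_act (iw_mult (iw_mult (aff_refl \<alpha> k) y) (iw_delta \<sigma> (aff_refl \<alpha> k))) ` A)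
      = kA (refl \<alpha> \<delta>0) + (c1 + k * m - k * nb)"
    unfolding imgs[of "iw_act (iw_mult (iw_mult (aff_refl \<alpha> k) y) (iw_delta \<sigma> (aff_refl \<alpha> k)))"]
    by (rule kval_eq[OF Ane]) (use hA[OF eR] i3 in auto)
  have KA: "\<And>a. a \<in> R \<Longrightarrow> kval a A = kA a"
  proof -
    fix a assume a: "a \<in> R"
    have "kval a (id ` A) = kA a" by (rule kval_eq[OF Ane]) (use hA[OF a] in auto)
    then show "kval a A = kA a" by simp
  qed
  have bar: "iw_bar y (\<sigma> \<alpha>) = w (\<sigma> \<alpha>)" unfolding iw_bar_def yeq by simp
  have bar2: "iw_bar (aff_refl \<alpha> k) \<beta> = refl \<alpha> \<beta>" unfolding iw_bar_def aff_refl_def by simp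
  have coreY: "kA (refl \<alpha> \<delta>0) + k * m = kA \<delta>0"
    if "\<beta> \<notin> {iw_bar y (\<sigma> \<alpha>), - iw_bar y (\<sigma> \<alpha>)}"
  proof (rule core[OF rs \<alpha> \<delta>R _ _ hA wall' m])
    show "\<delta>0 \<noteq> \<alpha>" using that bar w\<gamma> \<sigma>\<delta> by auto
    show "\<delta>0 \<noteq> - \<alpha>" using that bar w\<gamma> \<sigma>\<delta> linear_neg[OF lw] linear_neg[OF l\<sigma>] by auto
  qed
  have coreB: "kA (refl \<alpha> \<beta>) + k * nb = kA \<beta>" if "\<beta> \<noteq> \<alpha>" "\<beta> \<noteq> - \<alpha>"
    by (rule core[OF rs \<alpha> \<beta> that hA wall' nb])
  show ?thesis
    unfolding alc_geq_def K1 K2 K3 bar2 KA[OF \<beta>] KA[OF rbR]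
    using coreY coreB by auto
qed

end
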